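(* Let $U$ and $M$ be $k\times N$ real matrices, and let $\pi$ be a probability distribution on $[k]$ such that $u_{i,j}=\pi(i)m_{i,j}$ for all $i\in[k]$, $j\in[N]$. Then there exists a probability distribution $\widehat\pi$ on $[k]$, with support contained in the support of $\pi$, such that \[ \|M\|_{\ell_\infty\to L_2(\widehat\pi)}\le4\gamma_2^*(U). \]
   Context: For a distribution $\rho$ on $[k]$, $\|a\|_{L_2(\rho)}=(\sum_v\rho(v)a_v^2)^{1/2}$ and $\|M\|_{\ell_\infty\to L_2(\rho)}=\max_{\|f\|_\infty\le1}\|Mf\|_{L_2(\rho)}$. For matrices, $\|M\|_{1\to2}$ is the largest $\ell_2$ norm of a column and $\|M\|_{2\to\infty}$ the largest $\ell_2$ norm of a row; $\gamma_2(M)=\min\{\|R\|_{2\to\infty}\|A\|_{1\to2}:RA=M\}$; $M\bullet N=\sum_{i,j}m_{i,j}n_{i,j}$; $\gamma_2^*(U)=\max\{U\bullet V:\gamma_2(V)\le1\}$. *)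

theory Defs
  imports Complex_Main
begin

text \<open>Matrices with k rows and N columns are represented as functions
  nat \<Rightarrow> nat \<Rightarrow> real, only the entries with i < k, j < N being relevant.
  Indices of [k] are 0..k-1.\<close>

definition is_distribution :: "nat \<Rightarrow> (nat \<Rightarrow> real) \<Rightarrow> bool" where
  "is_distribution k \<rho> \<longleftrightarrow> (\<forall>i<k. \<rho> i \<ge> 0) \<and> (\<Sum>i<k. \<rho> i) = 1"

definition norm_2_inf :: "nat \<Rightarrow> nat \<Rightarrow> (nat \<Rightarrow> nat \<Rightarrow> real) \<Rightarrow> real" where
  "norm_2_inf k d R = Max (insert 0 ((\<lambda>i. sqrt (\<Sum>l<d. (R i l)\<^sup>2)) ` {..<k}))"

definition norm_1_2 :: "nat \<Rightarrow> nat \<Rightarrow> (nat \<Rightarrow> nat \<Rightarrow> real) \<Rightarrow> real" where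
  "norm_1_2 d N A = Max (insert 0 ((\<lambda>j. sqrt (\<Sum>l<d. (A l j)\<^sup>2)) ` {..<N}))"

definition gamma2 :: "nat \<Rightarrow> nat \<Rightarrow> (nat \<Rightarrow> nat \<Rightarrow> real) \<Rightarrow> real" where
  "gamma2 k N M = Inf {norm_2_inf k d R * norm_1_2 d N A | d R A.
      \<forall>i<k. \<forall>j<N. (\<Sum>l<d. R i l * A l j) = M i j}"

definition frob_inner :: "nat \<Rightarrow> nat \<Rightarrow> (nat \<Rightarrow> nat \<Rightarrow> real) \<Rightarrow> (nat \<Rightarrow> nat \<Rightarrow> real) \<Rightarrow> real" where
  "frob_inner k N M V = (\<Sum>i<k. \<Sum>j<N. M i j * V i j)"

definition gamma2_dual :: "nat \<Rightarrow> nat \<Rightarrow> (nat \<Rightarrow> nat \<Rightarrow> real) \<Rightarrow> real" where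
  "gamma2_dual k N U = Sup {frob_inner k N U V | V. gamma2 k N V \<le> 1}"

definition norm_inf_L2 :: "nat \<Rightarrow> nat \<Rightarrow> (nat \<Rightarrow> real) \<Rightarrow> (nat \<Rightarrow> nat \<Rightarrow> real) \<Rightarrow> real" where
  "norm_inf_L2 k N \<rho> M = Sup {sqrt (\<Sum>i<k. \<rho> i * (\<Sum>j<N. M i j * f j)\<^sup>2) | f.
      \<forall>j<N. \<bar>f j\<bar> \<le> 1}"

end

theory Submission
  imports Defs "HOL-Analysis.Analysis"
begin

lemma n2i_nonneg: "0 \<le> norm_2_inf k d R"
  unfolding norm_2_inf_def by (rule Max_ge) auto

lemma n2i_ge: "i < k \<Longrightarrow> sqrt (\<Sum>l<d. (R i l)\<^sup>2) \<le> norm_2_inf k d R"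
  unfolding norm_2_inf_def by (rule Max_ge) auto

lemma n2i_le1: "(\<And>i. i < k \<Longrightarrow> sqrt (\<Sum>l<d. (R i l)\<^sup>2) \<le> 1) \<Longrightarrow> norm_2_inf k d R \<le> 1"
  unfolding norm_2_inf_def by (subst Max_le_iff) auto

lemma n12_nonneg: "0 \<le> norm_1_2 d N A"
  unfolding norm_1_2_def by (rule Max_ge) auto

lemma n12_ge: "j < N \<Longrightarrow> sqrt (\<Sum>l<d. (A l j)\<^sup>2) \<le> norm_1_2 d N A"
  unfolding norm_1_2_def by (rule Max_ge) auto

lemma n12_le1: "(\<And>j. j < N \<Longrightarrow> sqrt (\<Sum>l<d. (A l j)\<^sup>2) \<le> 1) \<Longrightarrow> norm_1_2 d N A \<le> 1"
  unfolding norm_1_2_def by (subst Max_le_iff) auto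

lemma CS_abs:
  fixes a b :: "nat \<Rightarrow> real"
  shows "\<bar>\<Sum>l<d. a l * b l\<bar> \<le> sqrt (\<Sum>l<d. (a l)\<^sup>2) * sqrt (\<Sum>l<d. (b l)\<^sup>2)"
proof -
  have "(\<Sum>l<d. a l * b l)\<^sup>2 \<le> (\<Sum>l<d. (a l)\<^sup>2) * (\<Sum>l<d. (b l)\<^sup>2)"
    by (rule Cauchy_Schwarz_ineq_sum)
  then have "sqrt ((\<Sum>l<d. a l * b l)\<^sup>2) \<le> sqrt ((\<Sum>l<d. (a l)\<^sup>2) * (\<Sum>l<d. (b l)\<^sup>2))"
    using real_sqrt_le_mono by blast
  then show ?thesis by (simp add: real_sqrt_mult)
qed

lemma gamma2_set_bdd: "bdd_below {norm_2_inf k d R * norm_1_2 d N A | d R A.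
      \<forall>i<k. \<forall>j<N. (\<Sum>l<d. R i l * A l j) = M i j}"
  by (rule bdd_belowI[of _ 0]) (auto intro!: mult_nonneg_nonneg n2i_nonneg n12_nonneg)

lemma gamma2_set_ne: "{norm_2_inf k d R * norm_1_2 d N A | d R A.
      \<forall>i<k. \<forall>j<N. (\<Sum>l<d. R i l * A l j) = M i j} \<noteq> {}"
proof -
  have "\<forall>i<k. \<forall>j<N. (\<Sum>l<k. (\<lambda>i l. if i = l then 1 else 0) i l * M l j) = M i j"
  proof (intro allI impI)
    fix i j assume "i < k" "j < N"
    have "(\<Sum>l<k. (\<lambda>i l. if i = l then 1 else 0) i l * M l j) = (\<Sum>l<k. if i = l then M l j else 0)"
      by (rule sum.cong) auto
    also have "\<dots> = M i j" using \<open>i < k\<close> by (simp add: sum.delta)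
    finally show "(\<Sum>l<k. (\<lambda>i l. if i = l then 1 else 0) i l * M l j) = M i j" .
  qed
  then have "norm_2_inf k k (\<lambda>i l. if i = l then 1 else 0) * norm_1_2 k N M \<in> {norm_2_inf k d R * norm_1_2 d N A | d R A.
      \<forall>i<k. \<forall>j<N. (\<Sum>l<d. R i l * A l j) = M i j}" by blast
  then show ?thesis by blast
qed

lemma gamma2_le:
  assumes "\<forall>i<k. \<forall>j<N. (\<Sum>l<d. R i l * A l j) = M i j"
  shows "gamma2 k N M \<le> norm_2_inf k d R * norm_1_2 d N A"
  unfolding gamma2_def by (rule cInf_lower[OF _ gamma2_set_bdd]) (use assms in blast)

lemma gamma2_entry:
  assumes g: "gamma2 k N V \<le> 1" and i: "i < k" and j: "j < N"
  shows "\<bar>V i j\<bar> \<le> 1"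
proof -
  have "\<bar>V i j\<bar> \<le> gamma2 k N V"
    unfolding gamma2_def
  proof (rule cInf_greatest[OF gamma2_set_ne])
    fix x assume "x \<in> {norm_2_inf k d R * norm_1_2 d N A | d R A.
      \<forall>i<k. \<forall>j<N. (\<Sum>l<d. R i l * A l j) = V i j}"
    then obtain d R A where x: "x = norm_2_inf k d R * norm_1_2 d N A"
      and f: "\<forall>i<k. \<forall>j<N. (\<Sum>l<d. R i l * A l j) = V i j" by blast
    have "\<bar>V i j\<bar> = \<bar>\<Sum>l<d. R i l * A l j\<bar>" using f i j by simp
    also have "\<dots> \<le> sqrt (\<Sum>l<d. (R i l)\<^sup>2) * sqrt (\<Sum>l<d. (A l j)\<^sup>2)" by (rule CS_abs)
    also have "\<dots> \<le> x" unfolding x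
      by (rule mult_mono) (auto intro: n2i_ge[OF i] n12_ge[OF j] n2i_nonneg sum_nonneg)
    finally show "\<bar>V i j\<bar> \<le> x" .
  qed
  then show ?thesis using g by simp
qed

lemma dual_bdd: "bdd_above {frob_inner k N U V | V. gamma2 k N V \<le> 1}"
proof (rule bdd_aboveI[of _ "\<Sum>i<k. \<Sum>j<N. \<bar>U i j\<bar>"])
  fix x assume "x \<in> {frob_inner k N U V | V. gamma2 k N V \<le> 1}"
  then obtain V where x: "x = frob_inner k N U V" and g: "gamma2 k N V \<le> 1" by blast
  have "x \<le> (\<Sum>i<k. \<Sum>j<N. \<bar>U i j * V i j\<bar>)"
    unfolding x frob_inner_def
    by (intro sum_mono) auto
  also have "\<dots> \<le> (\<Sum>i<k. \<Sum>j<N. \<bar>U i j\<bar>)"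
  proof (intro sum_mono)
    fix i j assume "i \<in> {..<k}" "j \<in> {..<N}"
    then have "\<bar>V i j\<bar> \<le> 1" using gamma2_entry[OF g] by auto
    then show "\<bar>U i j * V i j\<bar> \<le> \<bar>U i j\<bar>"
      by (simp add: abs_mult mult_left_le)
  qed
  finally show "x \<le> (\<Sum>i<k. \<Sum>j<N. \<bar>U i j\<bar>)" .
qed

lemma dual_upper: "gamma2 k N V \<le> 1 \<Longrightarrow> frob_inner k N U V \<le> gamma2_dual k N U"
  unfolding gamma2_dual_def by (rule cSup_upper[OF _ dual_bdd]) blast

lemma KF:
  fixes d k N :: nat and y U M :: "nat \<Rightarrow> nat \<Rightarrow> real" and \<pi> :: "nat \<Rightarrow> real"
  assumes UM: "\<forall>i<k. \<forall>j<N. U i j = \<pi> i * M i j"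
    and y: "\<forall>j<N. (\<Sum>l<d. (y j l)\<^sup>2) \<le> 1"
  shows "(\<Sum>i<k. \<pi> i * sqrt (\<Sum>l<d. (\<Sum>j<N. M i j * y j l)\<^sup>2)) \<le> gamma2_dual k N U"
proof -
  define z where "z i l = (\<Sum>j<N. M i j * y j l)" for i l
  define nz where "nz i = sqrt (\<Sum>l<d. (z i l)\<^sup>2)" for i
  define x where "x i l = (if nz i = 0 then 0 else z i l / nz i)" for i l
  define V where "V i j = (\<Sum>l<d. x i l * y j l)" for i j
  have nzsq: "(nz i)\<^sup>2 = (\<Sum>l<d. (z i l)\<^sup>2)" for i
    unfolding nz_def by (simp add: sum_nonneg)
  have rowx: "sqrt (\<Sum>l<d. (x i l)\<^sup>2) \<le> 1" for i
  proof (cases "nz i = 0")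
    case True then show ?thesis by (simp add: x_def)
  next
    case False
    have "(\<Sum>l<d. (x i l)\<^sup>2) = (\<Sum>l<d. (z i l)\<^sup>2) / (nz i)\<^sup>2"
      using False by (simp add: x_def power_divide sum_divide_distrib)
    also have "\<dots> = 1" using False nzsq[of i] by (metis div_self power_not_zero)
    finally show ?thesis by simp
  qed
  have colx: "sqrt (\<Sum>l<d. (y j l)\<^sup>2) \<le> 1" if "j < N" for j
    using y that by simp
  have "gamma2 k N V \<le> norm_2_inf k d x * norm_1_2 d N (\<lambda>l j. y j l)"
    by (rule gamma2_le) (simp add: V_def)
  also have "\<dots> \<le> 1 * 1"
    by (rule mult_mono) (auto intro!: n2i_le1 n12_le1 rowx colx n12_nonneg)
  finally have g: "gamma2 k N V \<le> 1" by simp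
  have xz: "(\<Sum>l<d. x i l * z i l) = nz i" for i
  proof (cases "nz i = 0")
    case True then show ?thesis by (simp add: x_def)
  next
    case False
    have "(\<Sum>l<d. x i l * z i l) = (\<Sum>l<d. (z i l)\<^sup>2) / nz i"
      using False by (simp add: x_def sum_divide_distrib power2_eq_square)
    also have "\<dots> = nz i" unfolding nzsq[symmetric] using False by (simp add: power2_eq_square)
    finally show ?thesis .
  qed
  have inner: "(\<Sum>j<N. M i j * V i j) = nz i" for i
  proof -
    have "(\<Sum>j<N. M i j * V i j) = (\<Sum>j<N. \<Sum>l<d. x i l * (M i j * y j l))"
      unfolding V_def by (simp add: sum_distrib_left mult_ac)
    also have "\<dots> = (\<Sum>l<d. x i l * z i l)"
      unfolding z_def by (subst sum.swap) (simp add: sum_distrib_left)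
    finally show ?thesis using xz by simp
  qed
  have "frob_inner k N U V = (\<Sum>i<k. \<pi> i * nz i)"
    unfolding frob_inner_def
  proof (rule sum.cong[OF refl])
    fix i assume i: "i \<in> {..<k}"
    have "(\<Sum>j<N. U i j * V i j) = (\<Sum>j<N. \<pi> i * (M i j * V i j))"
      using UM i by (intro sum.cong) auto
    also have "\<dots> = \<pi> i * nz i" using inner by (simp add: sum_distrib_left[symmetric])
    finally show "(\<Sum>j<N. U i j * V i j) = \<pi> i * nz i" .
  qed
  then have "(\<Sum>i<k. \<pi> i * nz i) \<le> gamma2_dual k N U"
    using dual_upper[OF g, of U] by simp
  then show ?thesis by (simp add: nz_def z_def)
qed

definition Pw :: "nat set \<Rightarrow> real \<Rightarrow> (nat \<Rightarrow> real) \<Rightarrow> nat \<Rightarrow> real" where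
  "Pw S B L = (\<lambda>i. if i \<in> S then exp (- L i / B) / (\<Sum>l\<in>S. exp (- L l / B)) else 0)"

primrec Lc :: "nat set \<Rightarrow> real \<Rightarrow> ((nat \<Rightarrow> real) \<Rightarrow> (nat \<Rightarrow> real)) \<Rightarrow>
    (nat \<Rightarrow> (nat \<Rightarrow> real) \<Rightarrow> real) \<Rightarrow> nat \<Rightarrow> nat \<Rightarrow> real" where
  "Lc S B F a 0 = (\<lambda>i. 0)"
| "Lc S B F a (Suc s) = (\<lambda>i. Lc S B F a s i + a i (F (Pw S B (Lc S B F a s))))"

lemma exp_half:
  fixes y :: real
  assumes "0 \<le> y" "y \<le> 1"
  shows "exp (- y) \<le> 1 - y / 2"
proof -
  have e: "1 + y \<le> exp y" by (rule exp_ge_add_one_self)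
  have "exp (- y) = 1 / exp y" by (simp add: exp_minus field_simps)
  also have "\<dots> \<le> 1 / (1 + y)" using e assms by (intro divide_left_mono) auto
  also have "\<dots> \<le> 1 - y / 2"
  proof -
    have yy: "y * y \<le> y" using assms mult_left_le[of y y] by simp
    have "1 \<le> (1 - y / 2) * (1 + y)" using yy by (simp add: algebra_simps)
    then show ?thesis using assms by (simp add: field_simps)
  qed
  finally show ?thesis .
qed

lemma sum_if_restrict:
  fixes g :: "nat \<Rightarrow> real"
  assumes "S \<subseteq> {..<k}"
  shows "(\<Sum>i<k. if i \<in> S then g i else 0) = (\<Sum>i\<in>S. g i)"
proof -
  have "(\<Sum>i<k. if i \<in> S then g i else 0) = (\<Sum>i\<in>{..<k} \<inter> S. g i)"
    by (rule sum.inter_restrict[symmetric]) simp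
  also have "{..<k} \<inter> S = S" using assms by blast
  finally show ?thesis .
qed

theorem lemma3p7:
  fixes k N :: nat and U M :: "nat \<Rightarrow> nat \<Rightarrow> real" and \<pi> :: "nat \<Rightarrow> real"
  assumes "is_distribution k \<pi>"
    and "\<forall>i<k. \<forall>j<N. U i j = \<pi> i * M i j"
  shows "\<exists>\<pi>'. is_distribution k \<pi>' \<and> (\<forall>i<k. \<pi> i = 0 \<longrightarrow> \<pi>' i = 0) \<and>
           norm_inf_L2 k N \<pi>' M \<le> 4 * gamma2_dual k N U"
proof -
  note UM = assms(2)
  have pi_nn: "\<forall>i<k. 0 \<le> \<pi> i" and pi_sum: "(\<Sum>i<k. \<pi> i) = 1"
    using assms(1) unfolding is_distribution_def by auto
  define S where "S = {i. i < k \<and> \<pi> i \<noteq> 0}"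
  have Ssub: "S \<subseteq> {..<k}" unfolding S_def by auto
  have finS: "finite S" using Ssub finite_subset by blast
  have pi_S: "(\<Sum>i\<in>S. \<pi> i) = 1"
  proof -
    have "(\<Sum>i<k. \<pi> i) = (\<Sum>i<k. if i \<in> S then \<pi> i else 0)"
      by (rule sum.cong) (auto simp: S_def)
    then show ?thesis using pi_sum sum_if_restrict[OF Ssub] by simp
  qed
  have Sne: "S \<noteq> {}" using pi_S by auto
  define \<gamma> where "\<gamma> = gamma2_dual k N U"
  define a where "a i f = (\<Sum>j<N. M i j * f j)\<^sup>2" for i and f :: "nat \<Rightarrow> real"
  define cube where "cube f \<longleftrightarrow> (\<forall>j<N. \<bar>f j\<bar> \<le> (1::real))" for f :: "nat \<Rightarrow> real"
  define good where "good p \<longleftrightarrow> is_distribution k p \<and> (\<forall>i<k. \<pi> i = 0 \<longrightarrow> p i = 0)"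
    for p :: "nat \<Rightarrow> real"
  have \<gamma>0: "0 \<le> \<gamma>"
    using KF[OF UM, where d=0 and y="\<lambda>_ _. 0"] by (simp add: \<gamma>_def)
  have single: "(\<Sum>i<k. \<pi> i * sqrt (a i f)) \<le> \<gamma>" if "cube f" for f
  proof -
    have "\<forall>j<N. (\<Sum>l<(1::nat). ((\<lambda>j (l::nat). f j) j l)\<^sup>2) \<le> 1"
      using that unfolding cube_def by (auto simp: abs_square_le_1 lessThan_Suc)
    from KF[OF UM this] show ?thesis by (simp add: a_def \<gamma>_def)
  qed
  have key: "\<exists>p. good p \<and> (\<forall>f. cube f \<longrightarrow> (\<Sum>i<k. p i * a i f) \<le> 16 * \<gamma>\<^sup>2)"
  proof (rule ccontr)
    assume "\<not> ?thesis"
    then have H: "\<forall>p. good p \<longrightarrow> (\<exists>f. cube f \<and> 16 * \<gamma>\<^sup>2 < (\<Sum>i<k. p i * a i f))"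
      by (auto simp: not_le)
    have goodpi: "good \<pi>" using assms(1) by (simp add: good_def)
    show False
    proof (cases "\<gamma> = 0")
      case True
      obtain f where f: "cube f" "0 < (\<Sum>i<k. \<pi> i * a i f)" using H goodpi True by auto
      have "(\<Sum>i<k. \<pi> i * sqrt (a i f)) \<le> 0" using single[OF f(1)] True by simp
      moreover have "\<forall>i\<in>{..<k}. 0 \<le> \<pi> i * sqrt (a i f)" using pi_nn by (auto simp: a_def)
      ultimately have "(\<Sum>i<k. \<pi> i * sqrt (a i f)) = 0"
        by (meson antisym sum_nonneg)
      with \<open>\<forall>i\<in>{..<k}. 0 \<le> \<pi> i * sqrt (a i f)\<close> have z: "\<forall>i\<in>{..<k}. \<pi> i * sqrt (a i f) = 0"
        using sum_nonneg_eq_0_iff[of "{..<k}" "\<lambda>i. \<pi> i * sqrt (a i f)"] by simp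
      have "\<forall>i\<in>{..<k}. \<pi> i * a i f = 0"
      proof
        fix i assume "i \<in> {..<k}"
        then have "\<pi> i * sqrt (a i f) = 0" using z by blast
        then show "\<pi> i * a i f = 0" by (auto simp: a_def)
      qed
      then have "(\<Sum>i<k. \<pi> i * a i f) = 0" by (intro sum.neutral) blast
      then show False using f(2) by simp
    next
      case False
      then have gpos: "0 < \<gamma>" using \<gamma>0 by simp
      have "\<forall>p. \<exists>f. good p \<longrightarrow> cube f \<and> 16 * \<gamma>\<^sup>2 < (\<Sum>i<k. p i * a i f)" using H by blast
      then obtain F where F: "\<And>p. good p \<Longrightarrow> cube (F p) \<and> 16 * \<gamma>\<^sup>2 < (\<Sum>i<k. p i * a i (F p))"
        by metis
      define t where "t = \<gamma>\<^sup>2"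
      have tpos: "0 < t" using gpos by (simp add: t_def)
      define B where "B = 1 + (\<Sum>i<k. (\<Sum>j<N. \<bar>M i j\<bar>)\<^sup>2)"
      have Bpos: "0 < B" unfolding B_def by (simp add: add_pos_nonneg sum_nonneg)
      have a_nn: "0 \<le> a i f" for i f by (simp add: a_def)
      have aB: "a i f \<le> B" if "i < k" "cube f" for i f
      proof -
        have "\<bar>\<Sum>j<N. M i j * f j\<bar> \<le> (\<Sum>j<N. \<bar>M i j * f j\<bar>)" by (rule sum_abs)
        also have "\<dots> \<le> (\<Sum>j<N. \<bar>M i j\<bar>)"
        proof (rule sum_mono)
          fix j assume "j \<in> {..<N}"
          then have "\<bar>f j\<bar> \<le> 1" using that(2) by (simp add: cube_def)
          then show "\<bar>M i j * f j\<bar> \<le> \<bar>M i j\<bar>" by (simp add: abs_mult mult_left_le)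
        qed
        finally have "(\<Sum>j<N. M i j * f j)\<^sup>2 \<le> (\<Sum>j<N. \<bar>M i j\<bar>)\<^sup>2"
          by (metis abs_le_square_iff abs_of_nonneg sum_nonneg abs_ge_zero order_trans)
        also have "\<dots> \<le> (\<Sum>i<k. (\<Sum>j<N. \<bar>M i j\<bar>)\<^sup>2)"
          using that(1) by (intro member_le_sum) auto
        finally show ?thesis by (simp add: a_def B_def)
      qed
      define L where "L = Lc S B F a"
      define P where "P s = Pw S B (L s)" for s
      define \<Phi> where "\<Phi> s = (\<Sum>i\<in>S. exp (- L s i / B))" for s
      have \<Phi>pos: "0 < \<Phi> s" for s unfolding \<Phi>_def using finS Sne by (intro sum_pos) auto
      have goodP: "good (P s)" for s
      proof -
        have "(\<Sum>i<k. P s i) = (\<Sum>i\<in>S. exp (- L s i / B) / \<Phi> s)"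
          unfolding P_def Pw_def \<Phi>_def using sum_if_restrict[OF Ssub] by simp
        also have "\<dots> = 1" using \<Phi>pos[of s] by (simp add: sum_divide_distrib[symmetric] \<Phi>_def)
        finally have "(\<Sum>i<k. P s i) = 1" .
        moreover have "\<forall>i<k. 0 \<le> P s i" unfolding P_def Pw_def
          using \<Phi>pos[of s] by (auto simp: \<Phi>_def)
        moreover have "\<forall>i<k. \<pi> i = 0 \<longrightarrow> P s i = 0" unfolding P_def Pw_def S_def by auto
        ultimately show ?thesis by (simp add: good_def is_distribution_def)
      qed
      define x where "x = t / B"
      have xpos: "0 < x" using tpos Bpos by (simp add: x_def)
      have x8: "8 * x < 1"
      proof -
        obtain f where f: "cube f" "16 * t < (\<Sum>i<k. P 0 i * a i f)" using H goodP t_def by blast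
        have "(\<Sum>i<k. P 0 i * a i f) \<le> (\<Sum>i<k. P 0 i * B)"
          using goodP[of 0] aB f(1) by (intro sum_mono mult_left_mono) (auto simp: good_def is_distribution_def)
        also have "\<dots> = B" using goodP[of 0] by (simp add: sum_distrib_right[symmetric] good_def is_distribution_def)
        finally have "16 * t < B" using f(2) by simp
        then show ?thesis using Bpos by (simp add: x_def field_simps)
      qed
      have step: "\<Phi> (Suc s) \<le> \<Phi> s * (1 - 8 * x)" for s
      proof -
        define f where "f = F (P s)"
        have f: "cube f" "16 * t < (\<Sum>i<k. P s i * a i f)" using F[OF goodP[of s]] by (auto simp: f_def t_def)
        define w where "w i = exp (- L s i / B)" for i
        have Lsuc: "L (Suc s) i = L s i + a i f" for i by (simp add: L_def f_def P_def)
        have "(\<Sum>i<k. P s i * a i f) = (\<Sum>i\<in>S. w i * a i f) / \<Phi> s"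
        proof -
          have "(\<Sum>i<k. P s i * a i f) = (\<Sum>i<k. if i \<in> S then w i * a i f / \<Phi> s else 0)"
            by (rule sum.cong) (auto simp: P_def Pw_def w_def \<Phi>_def)
          also have "\<dots> = (\<Sum>i\<in>S. w i * a i f / \<Phi> s)" by (rule sum_if_restrict[OF Ssub])
          finally show ?thesis by (simp add: sum_divide_distrib)
        qed
        with f(2) have big: "16 * t * \<Phi> s < (\<Sum>i\<in>S. w i * a i f)"
          using \<Phi>pos[of s] by (simp add: field_simps)
        have "\<Phi> (Suc s) = (\<Sum>i\<in>S. w i * exp (- (a i f / B)))"
        proof -
          have e: "(- (L s i + a i f) / B) = (- L s i / B) + (- (a i f / B))" for i
            by (simp add: add_divide_distrib[symmetric] diff_divide_distrib)
          show ?thesis unfolding \<Phi>_def w_def Lsuc e exp_add by simp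
        qed
        also have "\<dots> \<le> (\<Sum>i\<in>S. w i * (1 - (a i f / B) / 2))"
        proof (rule sum_mono)
          fix i assume "i \<in> S"
          then have "i < k" using Ssub by auto
          then have "0 \<le> a i f / B" "a i f / B \<le> 1" using aB[OF _ f(1)] a_nn Bpos by auto
          then show "w i * exp (- (a i f / B)) \<le> w i * (1 - (a i f / B) / 2)"
            by (intro mult_left_mono exp_half) (auto simp: w_def)
        qed
        also have "\<dots> = \<Phi> s - (\<Sum>i\<in>S. w i * a i f) / (2 * B)"
          by (simp add: \<Phi>_def w_def algebra_simps sum_subtractf sum_divide_distrib)
        also have "\<dots> \<le> \<Phi> s - 16 * t * \<Phi> s / (2 * B)"
        proof -
          have "16 * t * \<Phi> s / (2 * B) \<le> (\<Sum>i\<in>S. w i * a i f) / (2 * B)"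
            using big Bpos by (intro divide_right_mono) auto
          then show ?thesis by linarith
        qed
        also have "\<dots> = \<Phi> s * (1 - 8 * x)" using Bpos by (simp add: x_def field_simps)
        finally show ?thesis .
      qed
      define m where "m = real (card S)"
      have m1: "1 \<le> m" using finS Sne by (simp add: m_def Suc_le_eq card_gt_0_iff)
      have \<Phi>bound: "\<Phi> s \<le> m * (1 - 8 * x) ^ s" for s
      proof (induction s)
        case 0 then show ?case by (simp add: \<Phi>_def L_def m_def)
      next
        case (Suc s)
        have "\<Phi> (Suc s) \<le> \<Phi> s * (1 - 8 * x)" by (rule step)
        also have "\<dots> \<le> m * (1 - 8 * x) ^ s * (1 - 8 * x)"
          using Suc x8 by (intro mult_right_mono) auto
        finally show ?case by (simp add: mult_ac)
      qed
      have Lsum: "L T i = (\<Sum>l<T. a i (F (P l)))" for T i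
        by (induction T) (auto simp: L_def P_def)
      define r where "r = exp (- x) / (1 - 8 * x)"
      have r1: "1 < r"
      proof -
        have "1 - x \<le> exp (- x)" using exp_ge_add_one_self[of "- x"] by simp
        then have "1 - 8 * x < exp (- x)" using xpos by simp
        then show ?thesis using x8 by (simp add: r_def)
      qed
      obtain T where T: "m < r ^ T" using real_arch_pow[OF r1] by blast
      have Tpos: "0 < T" using T m1 by (cases T) auto
      define y where "y j l = F (P l) j / sqrt (real T)" for j l
      have ycol: "\<forall>j<N. (\<Sum>l<T. (y j l)\<^sup>2) \<le> 1"
      proof (intro allI impI)
        fix j assume j: "j < N"
        have "(\<Sum>l<T. (y j l)\<^sup>2) \<le> (\<Sum>l<T. 1 / real T)"
        proof (rule sum_mono)
          fix l assume "l \<in> {..<T}"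
          have "\<bar>F (P l) j\<bar> \<le> 1" using F[OF goodP[of l]] j by (auto simp: cube_def)
          then have "(F (P l) j)\<^sup>2 \<le> 1" by (simp add: abs_square_le_1)
          then show "(y j l)\<^sup>2 \<le> 1 / real T" using Tpos
            by (simp add: y_def power_divide divide_right_mono)
        qed
        also have "\<dots> = 1" using Tpos by simp
        finally show "(\<Sum>l<T. (y j l)\<^sup>2) \<le> 1" .
      qed
      have zrow: "(\<Sum>l<T. (\<Sum>j<N. M i j * y j l)\<^sup>2) = L T i / real T" for i
      proof -
        have "(\<Sum>l<T. (\<Sum>j<N. M i j * y j l)\<^sup>2) = (\<Sum>l<T. a i (F (P l)) / real T)"
        proof (rule sum.cong[OF refl])
          fix l
          have "(\<Sum>j<N. M i j * y j l) = (\<Sum>j<N. M i j * F (P l) j) / sqrt (real T)"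
            by (simp add: y_def sum_divide_distrib)
          then show "(\<Sum>j<N. M i j * y j l)\<^sup>2 = a i (F (P l)) / real T"
            by (simp add: a_def power_divide)
        qed
        then show ?thesis by (simp add: Lsum sum_divide_distrib)
      qed
      have KT: "(\<Sum>i<k. \<pi> i * sqrt (L T i / real T)) \<le> \<gamma>"
        using KF[OF UM ycol] by (simp add: zrow \<gamma>_def)
      have "\<exists>i\<in>S. sqrt (L T i / real T) \<le> \<gamma>"
      proof (rule ccontr)
        assume "\<not> ?thesis"
        then have gt: "\<forall>i\<in>S. \<gamma> < sqrt (L T i / real T)" by auto
        have "\<gamma> = (\<Sum>i\<in>S. \<pi> i * \<gamma>)" using pi_S by (simp add: sum_distrib_right[symmetric])
        also have "\<dots> < (\<Sum>i\<in>S. \<pi> i * sqrt (L T i / real T))"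
        proof -
          have pipos: "\<forall>i\<in>S. 0 < \<pi> i" using pi_nn unfolding S_def by force
          show ?thesis by (intro sum_strict_mono mult_strict_left_mono) (use finS Sne gt pipos in auto)
        qed
        also have "\<dots> = (\<Sum>i<k. \<pi> i * sqrt (L T i / real T))"
        proof -
          have "(\<Sum>i<k. \<pi> i * sqrt (L T i / real T)) = (\<Sum>i<k. if i \<in> S then \<pi> i * sqrt (L T i / real T) else 0)"
            by (rule sum.cong) (auto simp: S_def)
          then show ?thesis using sum_if_restrict[OF Ssub] by simp
        qed
        finally show False using KT by simp
      qed
      then obtain i where iS: "i \<in> S" and isq: "sqrt (L T i / real T) \<le> \<gamma>" by blast
      have "L T i / real T \<le> \<gamma>\<^sup>2" using isq gpos
        by (metis real_sqrt_le_iff real_sqrt_power abs_of_nonneg \<gamma>0 real_sqrt_abs)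
      then have LT: "L T i \<le> real T * t" using Tpos by (simp add: t_def field_simps)
      have "exp (- (real T * x)) \<le> exp (- L T i / B)"
        using LT Bpos by (simp add: x_def field_simps)
      also have "\<dots> \<le> \<Phi> T" unfolding \<Phi>_def using finS iS
        by (intro member_le_sum) auto
      also have "\<dots> \<le> m * (1 - 8 * x) ^ T" by (rule \<Phi>bound)
      also have "\<dots> < r ^ T * (1 - 8 * x) ^ T" using T x8 by (intro mult_strict_right_mono) auto
      also have "\<dots> = exp (- x) ^ T" using x8 by (simp add: r_def power_divide)
      also have "\<dots> = exp (- (real T * x))" by (simp add: exp_of_nat_mult[symmetric])
      finally show False by simp
    qed
  qed
  then obtain p where gp: "good p" and pb: "\<forall>f. cube f \<longrightarrow> (\<Sum>i<k. p i * a i f) \<le> 16 * \<gamma>\<^sup>2"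
    by blast
  have "norm_inf_L2 k N p M \<le> 4 * \<gamma>"
    unfolding norm_inf_L2_def
  proof (rule cSup_least)
    show "{sqrt (\<Sum>i<k. p i * (\<Sum>j<N. M i j * f j)\<^sup>2) | f. \<forall>j<N. \<bar>f j\<bar> \<le> 1} \<noteq> {}"
      by (rule ccontr) (auto dest: spec[of _ "\<lambda>_. 0"])
  next
    fix v assume "v \<in> {sqrt (\<Sum>i<k. p i * (\<Sum>j<N. M i j * f j)\<^sup>2) | f. \<forall>j<N. \<bar>f j\<bar> \<le> 1}"
    then obtain f where v: "v = sqrt (\<Sum>i<k. p i * a i f)" and c: "cube f"
      by (auto simp: a_def cube_def)
    have "v \<le> sqrt ((4 * \<gamma>)\<^sup>2)" unfolding v using pb c by (simp add: power_mult_distrib)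
    also have "\<dots> = 4 * \<gamma>" using \<gamma>0 by (subst real_sqrt_abs) simp
    finally show "v \<le> 4 * \<gamma>" .
  qed
  then show ?thesis using gp unfolding good_def \<gamma>_def by blast
qed

end
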